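(* Suppose $\tau_f\in(\tau_2^i,\tau_c)$. Then $$p'(\tau)<\frac{2h(\tau)-2h(\tau_f)}{\tau^2-\tau_f^2}<p'(\tau_f)\quad\text{for }\tau\in\big(1,\tau_{pr}(\tau_{po}(\tau_f))\big).$$ Moreover, for any $\tau_b\in(1,\tau_{pr}(\tau_{po}(\tau_f)))$, Liu's extended entropy condition $\frac{2h(\tau_f)-2h(\tau_b)}{\tau_f^2-\tau_b^2}<\frac{2h(\tau_f)-2h(\tau)}{\tau_f^2-\tau^2}$ for all $\tau\in(\tau_b,\tau_f)$ holds.
   Context: The pressure is $p(\tau)=\frac{\mathcal S}{(\tau-1)^\gamma}-\frac{1}{\tau^2}$ for $\tau>1$, with constants $1<\gamma<2$, $\mathcal S>0$, assumed such that there exist $1<\tau_1^i<\tau_2^i$ with $p'<0$ on $(1,\infty)$, $p''>0$ on $(1,\tau_1^i)\cup(\tau_2^i,\infty)$, $p''<0$ on $(\tau_1^i,\tau_2^i)$. The function $h$ satisfies $h'(\tau)=\tau p'(\tau)$. $\tau_c$ is the unique $\tau_c\in(\tau_1^i,\infty)$ with $p'(\tau_1^i)=\frac{2h(\tau_c)-2h(\tau_1^i)}{\tau_c^2-(\tau_1^i)^2}$. For $\tau_f\in(\tau_2^i,\tau_c)$, $\tau_{po}(\tau_f)$ is the unique $\tau\in(\tau_1^i,\tau_2^i)$ with $p'(\tau)=\frac{2h(\tau)-2h(\tau_f)}{\tau^2-\tau_f^2}$. For $\sigma\in(\tau_1^i,\tau_2^i)$, $\tau_{pr}(\sigma)$ is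 the unique $\tau\in(1,\sigma)$ with $\frac{2h(\tau)-2h(\sigma)}{\tau^2-\sigma^2}=p'(\sigma)$. *)

theory Defs
  imports "HOL-Analysis.Analysis"
begin

definition pres :: "real \<Rightarrow> real \<Rightarrow> real \<Rightarrow> real" where
  "pres S \<gamma> t = S / (t - 1) powr \<gamma> - 1 / t ^ 2"

definition chord :: "(real \<Rightarrow> real) \<Rightarrow> real \<Rightarrow> real \<Rightarrow> real" where
  "chord h a b = (2 * h a - 2 * h b) / (a ^ 2 - b ^ 2)"

end

theory Submission
  imports Defs
begin

definition p1 :: "real \<Rightarrow> real \<Rightarrow> real \<Rightarrow> real" where
  "p1 S g t = S * (- g * (t-1) powr (- g - 1)) + 2 / t^3"
lemma pres_eq: "1 < t \<Longrightarrow> pres S g t = S * (t-1) powr (-g) - 1/t^2"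
  by (simp add: pres_def powr_minus_divide)
lemma pres_deriv: assumes "1 < t" shows "(pres S g has_real_derivative p1 S g t) (at t)"
proof -
  have "((\<lambda>t. S * (t-1) powr (-g) - 1/t^2) has_real_derivative p1 S g t) (at t)"
    using assms unfolding p1_def
    apply (auto intro!: derivative_eq_intros)
    apply (simp add: field_simps power_eq_if)
    done
  then show ?thesis
    apply (rule has_field_derivative_transform_within_open[where S="{1<..}"])
    using assms by (auto simp: pres_eq)
qed
lemma deriv_pres: "1 < t \<Longrightarrow> deriv (pres S g) t = p1 S g t"
  using pres_deriv DERIV_imp_deriv by blast
lemma p1_diff: "1 < t \<Longrightarrow> p1 S g differentiable at t"
  unfolding p1_def real_differentiable_def by (rule exI) (auto intro!: derivative_eq_intros)
lemma dpres_deriv: assumes "1 < t"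
  shows "(deriv (pres S g) has_real_derivative deriv (deriv (pres S g)) t) (at t)"
proof -
  have "deriv (pres S g) differentiable at t"
  proof -
    obtain D where "(p1 S g has_real_derivative D) (at t)"
      using p1_diff[OF assms] real_differentiable_def by blast
    then have "(deriv (pres S g) has_real_derivative D) (at t)"
      apply (rule has_field_derivative_transform_within_open[where S="{1<..}"])
      using assms by (auto simp: deriv_pres)
    then show ?thesis using real_differentiable_def by blast
  qed
  then show ?thesis using DERIV_deriv_iff_real_differentiable by blast
qed

lemma sqlt: "0 < (a::real) \<Longrightarrow> a < b \<Longrightarrow> a^2 < b^2"
  by (simp add: power_strict_mono)

lemma core:
  fixes q h :: "real \<Rightarrow> real" and t1 t2 tf tpo tpr :: real
  assumes t12: "1<t1" "t1<t2"
  and m1: "\<And>a b. 1<a \<Longrightarrow> a<b \<Longrightarrow> b\<le>t1 \<Longrightarrow> q a < q b"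
  and m2: "\<And>a b. t1\<le>a \<Longrightarrow> a<b \<Longrightarrow> b\<le>t2 \<Longrightarrow> q b < q a"
  and m3: "\<And>a b. t2\<le>a \<Longrightarrow> a<b \<Longrightarrow> q a < q b"
  and hd: "\<And>t. 1<t \<Longrightarrow> (h has_real_derivative t * q t) (at t)"
  and tf: "t2<tf"
  and tpo: "t1<tpo" "tpo<t2" "q tpo = chord h tpo tf"
  and tpr: "1<tpr" "tpr<tpo" "chord h tpr tpo = q tpo"
  shows "(\<forall>t. 1 < t \<and> t < tpr \<longrightarrow>
            q t < chord h t tf \<and> chord h t tf < q tf)
       \<and> (\<forall>tb. 1 < tb \<and> tb < tpr \<longrightarrow>
            (\<forall>t. tb < t \<and> t < tf \<longrightarrow> chord h tf tb < chord h tf t))"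
proof -
  define c where "c = q tpo"
  define D where "D s = h s - h tpo - c*(s^2 - tpo^2)/2" for s
  have Dd: "(D has_real_derivative s*(q s - c)) (at s)" if "1<s" for s
    unfolding D_def using that
    by (auto intro!: derivative_eq_intros hd simp: algebra_simps)
  have mvt: "\<exists>z>a. z<b \<and> D b - D a = (b-a)*(z*(q z - c))" if "1<a" "a<b" for a b
    using MVT2[of a b D "\<lambda>s. s*(q s - c)"] Dd that by auto
  have incD: "D a < D b" if ab: "1<a" "a<b" "\<And>s. a<s \<Longrightarrow> s<b \<Longrightarrow> q s > c" for a b
  proof -
    obtain z where z: "z>a" "z<b" "D b - D a = (b-a)*(z*(q z - c))" using mvt ab(1,2) by blast
    have "(b-a)*(z*(q z - c)) > 0" using z ab by (intro mult_pos_pos) auto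
    then show ?thesis using z by linarith
  qed
  have decD: "D b < D a" if ab: "1<a" "a<b" "\<And>s. a<s \<Longrightarrow> s<b \<Longrightarrow> q s < c" for a b
  proof -
    obtain z where z: "z>a" "z<b" "D b - D a = (b-a)*(z*(q z - c))" using mvt ab(1,2) by blast
    have "(b-a)*(z*(c - q z)) > 0" using z ab by (intro mult_pos_pos) auto
    then show ?thesis using z by (simp add: algebra_simps)
  qed
  have D0: "D tpo = 0" unfolding D_def by simp
  have ne1: "tpo^2 - tf^2 \<noteq> 0" using tpo t12 tf by (smt (verit) sqlt)
  have Dtf: "D tf = 0"
  proof -
    have "c * (tpo^2 - tf^2) = 2*h tpo - 2*h tf" using tpo(3) ne1 unfolding c_def chord_def by simp
    then show ?thesis unfolding D_def by (simp add: field_simps; linarith)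
  qed
  have ne2: "tpr^2 - tpo^2 \<noteq> 0" using tpo t12 tpr by (smt (verit) sqlt)
  have Dtpr: "D tpr = 0"
  proof -
    have "c * (tpr^2 - tpo^2) = 2*h tpr - 2*h tpo" using tpr(3) ne2 unfolding c_def chord_def
      by (simp add: field_simps)
    then show ?thesis unfolding D_def by (simp add: field_simps; linarith)
  qed
  have S1a: "q s > c" if "t1\<le>s" "s<tpo" for s using m2[of s tpo] that tpo unfolding c_def by auto
  have S1b: "q s < c" if "tpo<s" "s\<le>t2" for s using m2[of tpo s] that tpo unfolding c_def by auto
  have S2: "q tf > c"
  proof (rule ccontr)
    assume a: "\<not> q tf > c"
    have "D tf < D tpo"
    proof (rule decD)
      fix s assume s: "tpo<s" "s<tf"
      show "q s < c"
      proof (cases "s \<le> t2")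
        case True then show ?thesis using S1b s by auto
      next
        case False then show ?thesis using m3[of s tf] s a by auto
      qed
    qed (use tpo t12 tf in auto)
    then show False using D0 Dtf by simp
  qed
  have S3: "D t < 0" if "t1\<le>t" "t<tpo" for t
    using incD[of t tpo] S1a that t12 D0 by auto
  have S4: "tpr < t1"
  proof (rule ccontr)
    assume "\<not> tpr < t1" then show False using S3[of tpr] tpr Dtpr by auto
  qed
  have S5: "D t \<le> 0" if tt: "tpr\<le>t" "t<tf" for t
  proof -
    consider "t = tpr" | "tpr<t" "t<t1" | "t1\<le>t" "t<tpo" | "t=tpo" | "tpo<t" "t\<le>t2" | "t2<t" "t<tf"
      using tt S4 tpo by linarith
    then show ?thesis
    proof cases
      case 1 then show ?thesis using Dtpr by simp
    next
      case 2
      show ?thesis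
      proof (rule ccontr)
        assume a: "\<not> D t \<le> 0"
        obtain z where z: "z>tpr" "z<t" "D t - D tpr = (t-tpr)*(z*(q z - c))"
          using mvt[of tpr t] 2 tpr by blast
        have "q z > c"
        proof (rule ccontr)
          assume "\<not> q z > c"
          then have "(t-tpr)*(z*(c - q z)) \<ge> 0" using z tpr by (intro mult_nonneg_nonneg) auto
          then show False using z a Dtpr by (simp add: algebra_simps)
        qed
        have "D t < D t1"
        proof (rule incD)
          fix s assume "t<s" "s<t1"
          then show "q s > c" using m1[of z s] z 2 tpr \<open>q z > c\<close> by force
        qed (use 2 tpr z in auto)
        then show False using S3[of t1] tpo a by auto
      qed
    next
      case 3 then show ?thesis using S3[of t] by linarith
    next
      case 4 then show ?thesis using D0 by simp
    next
      case 5
      have "D t < D tpo" by (rule decD) (use 5 S1b tpo t12 in auto)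
      then show ?thesis using D0 by linarith
    next
      case 6
      show ?thesis
      proof (rule ccontr)
        assume a: "\<not> D t \<le> 0"
        obtain z where z: "z>t" "z<tf" "D tf - D t = (tf-t)*(z*(q z - c))"
          using mvt[of t tf] 6 t12 by force
        have "q z < c"
        proof (rule ccontr)
          assume "\<not> q z < c"
          then have "(tf-t)*(z*(q z - c)) \<ge> 0" using z 6 t12 by (intro mult_nonneg_nonneg) auto
          then show False using z a Dtf by (simp add: algebra_simps)
        qed
        have "D t < D tpo"
        proof (rule decD)
          fix s assume s: "tpo<s" "s<t"
          show "q s < c"
          proof (cases "s \<le> t2")
            case True then show ?thesis using S1b s by auto
          next
            case False then show ?thesis using m3[of s z] s z \<open>q z < c\<close> by auto
          qed
        qed (use tpo t12 6 in auto)
        then show False using D0 a by simp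
      qed
    qed
  qed
  have S6: "q t < c" if "1<t" "t<tpr" for t
  proof (rule ccontr)
    assume a: "\<not> q t < c"
    have "D tpr < D t1"
    proof (rule incD)
      fix s assume "tpr<s" "s<t1"
      then show "q s > c" using m1[of t s] that a by force
    qed (use S4 tpr in auto)
    then show False using S3[of t1] Dtpr tpo by auto
  qed
  have S7: "D t > 0" if "1<t" "t<tpr" for t
  proof -
    have "D tpr < D t" by (rule decD) (use S6 that in auto)
    then show ?thesis using Dtpr by linarith
  qed
  have S8: "D t < (c - q t)*(tpr^2 - t^2)/2" if t: "1<t" "t<tpr" for t
  proof -
    define Ef where "Ef s = D s + (c - q t) * (s^2) / 2" for s
    have Ed: "(Ef has_real_derivative s*(q s - q t)) (at s)" if "1<s" for s
    proof -
      have "(Ef has_real_derivative s*(q s - c) + (c - q t) * (2 * s) / 2) (at s)"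
        unfolding Ef_def using that
        by (auto intro!: derivative_eq_intros Dd)
      then show ?thesis by (rule DERIV_cong) (simp add: field_simps)
    qed
    obtain z where z: "z>t" "z<tpr" "Ef tpr - Ef t = (tpr-t)*(z*(q z - q t))"
      using MVT2[of t tpr Ef "\<lambda>s. s*(q s - q t)"] Ed t by force
    have "(tpr-t)*(z*(q z - q t)) > 0"
      using z t m1[of t z] S4 by (intro mult_pos_pos) auto
    then have "Ef t < Ef tpr" using z by linarith
    moreover have "(c - q t)*(tpr^2-t^2)/2 = (c - q t) * (tpr^2) / 2 - (c - q t) * (t^2) / 2"
      by (simp add: field_simps)
    ultimately show ?thesis using Dtpr unfolding Ef_def by linarith
  qed
  have ch: "chord h t tf = c - 2*D t/(tf^2-t^2)" "chord h tf t = c - 2*D t/(tf^2-t^2)"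
    if "1<t" "t<tf" for t
  proof -
    have ne: "tf^2 - t^2 \<noteq> 0" using that by (smt (verit) sqlt)
    have ne': "t^2 - tf^2 \<noteq> 0" using ne by linarith
    have htf: "h tf = h tpo + c*(tf^2-tpo^2)/2" using Dtf unfolding D_def by simp
    show "chord h t tf = c - 2*D t/(tf^2-t^2)" unfolding chord_def D_def htf
      using ne ne' by (simp add: field_simps)
    show "chord h tf t = c - 2*D t/(tf^2-t^2)" unfolding chord_def D_def htf
      using ne ne' by (simp add: field_simps)
  qed
  have P1: "q t < chord h t tf \<and> chord h t tf < q tf" if t: "1<t" "t<tpr" for t
  proof -
    have tt: "t < tf" using t tpr tpo t12 tf by linarith
    have pos: "tf^2 - t^2 > 0" using tt t by (smt (verit) sqlt)
    have le: "tpr^2 - t^2 \<le> tf^2 - t^2" using tpr tpo t12 tf by (smt (verit) sqlt)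
    have "2*D t < (c - q t)*(tf^2-t^2)"
      using S8[OF t] mult_left_mono[OF le, of "c - q t"] S6[OF t] by linarith
    then have a: "2*D t/(tf^2-t^2) < c - q t" using pos by (simp add: pos_divide_less_eq)
    have b: "2*D t/(tf^2-t^2) > 0" using S7[OF t] pos by simp
    show ?thesis using ch[OF t(1) tt] a b S2 by linarith
  qed
  have P2: "chord h tf tb < chord h tf t" if tb: "1<tb" "tb<tpr" and t: "tb<t" "t<tf" for tb t
  proof -
    have tbf: "tb < tf" using tb tpr tpo t12 tf by linarith
    have posb: "tf^2 - tb^2 > 0" using tbf tb by (smt (verit) sqlt)
    have cb: "chord h tf tb < c" using ch(2)[OF tb(1) tbf] S7[OF tb] posb by simp
    show ?thesis
    proof (cases "tpr \<le> t")
      case True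
      have pos: "tf^2 - t^2 > 0" using t tb by (smt (verit) sqlt)
      have "chord h tf t \<ge> c" using ch(2)[of t] t tb S5[OF True t(2)] pos
        by (simp add: divide_nonpos_pos)
      then show ?thesis using cb by linarith
    next
      case False
      define \<psi> where "\<psi> y = (2*h tf - 2*h y)/(tf^2-y^2)" for y
      have \<psi>d: "(\<psi> has_real_derivative (2* s*(chord h tf s - q s)/(tf^2-s^2))) (at s)"
        if s: "1<s" "s<tf" for s
      proof -
        have ne: "tf^2 - s^2 \<noteq> 0" using s by (smt (verit) sqlt)
        have "(\<psi> has_real_derivative (((-(2*(s*q s)))*(tf^2-s^2) - (-(2* s))*(2*h tf - 2*h s))/(tf^2-s^2)^2)) (at s)"
          unfolding \<psi>_def using ne s
          by (auto intro!: derivative_eq_intros hd simp: power2_eq_square)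
        moreover have "((-(2*(s*q s)))*(tf^2-s^2) - (-(2* s))*(2*h tf - 2*h s))/(tf^2-s^2)^2
            = 2* s*(chord h tf s - q s)/(tf^2-s^2)"
          unfolding chord_def using ne by (simp add: field_simps power2_eq_square)
        ultimately show ?thesis by simp
      qed
      obtain z where z: "z>tb" "z<t" "\<psi> t - \<psi> tb = (t-tb)*(2*z*(chord h tf z - q z)/(tf^2-z^2))"
        using MVT2[of tb t \<psi> "\<lambda>s. 2* s*(chord h tf s - q s)/(tf^2-s^2)"] \<psi>d t tb by force
      have zz: "1<z" "z<tpr" "z<tf" using z tb False t by auto
      have posz: "tf^2 - z^2 > 0" using zz by (smt (verit) sqlt)
      have symm: "chord h tf z = chord h z tf" unfolding chord_def
        by (simp add: field_simps) (smt (verit) minus_divide_divide)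
      have "chord h tf z - q z > 0" using P1[OF zz(1,2)] symm by linarith
      then have "(t-tb)*(2*z*(chord h tf z - q z)/(tf^2-z^2)) > 0"
        using z zz posz by (intro mult_pos_pos divide_pos_pos) auto
      then show ?thesis using z unfolding \<psi>_def chord_def by linarith
    qed
  qed
  show ?thesis using P1 P2 unfolding c_def by blast
qed

theorem proposition3p6:
  fixes S \<gamma> t1 t2 tc tf tpo tpr :: real and h :: "real \<Rightarrow> real"
  defines "p \<equiv> pres S \<gamma>"
  assumes gamma: "1 < \<gamma>" "\<gamma> < 2" and S_pos: "S > 0"
    and t12: "1 < t1" "t1 < t2"
    and p'_neg: "\<forall>t. 1 < t \<longrightarrow> deriv p t < 0"
    and p''_pos: "\<forall>t. (1 < t \<and> t < t1) \<or> t2 < t \<longrightarrow> deriv (deriv p) t > 0"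
    and p''_neg: "\<forall>t. t1 < t \<and> t < t2 \<longrightarrow> deriv (deriv p) t < 0"
    and h_deriv: "\<forall>t. 1 < t \<longrightarrow> (h has_real_derivative t * deriv p t) (at t)"
    and tc: "t1 < tc" "deriv p t1 = chord h tc t1"
    and tc_unique: "\<forall>t. t1 < t \<and> deriv p t1 = chord h t t1 \<longrightarrow> t = tc"
    and tf: "t2 < tf" "tf < tc"
    and tpo: "t1 < tpo" "tpo < t2" "deriv p tpo = chord h tpo tf"
    and tpo_unique: "\<forall>t. t1 < t \<and> t < t2 \<and> deriv p t = chord h t tf \<longrightarrow> t = tpo"
    and tpr: "1 < tpr" "tpr < tpo" "chord h tpr tpo = deriv p tpo"
    and tpr_unique: "\<forall>t. 1 < t \<and> t < tpo \<and> chord h t tpo = deriv p tpo \<longrightarrow> t = tpr"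
  shows "(\<forall>t. 1 < t \<and> t < tpr \<longrightarrow>
            deriv p t < chord h t tf \<and> chord h t tf < deriv p tf)
       \<and> (\<forall>tb. 1 < tb \<and> tb < tpr \<longrightarrow>
            (\<forall>t. tb < t \<and> t < tf \<longrightarrow> chord h tf tb < chord h tf t))"
proof -
  let ?q = "deriv p"
  have dq: "(?q has_real_derivative deriv ?q x) (at x)" if "1 < x" for x
    unfolding p_def using dpres_deriv[OF that] .
  have cont: "continuous_on {a..b} ?q" if "1 < a" for a b
  proof (rule continuous_at_imp_continuous_on, rule ballI)
    fix x assume "x \<in> {a..b}"
    then have "1 < x" using that by auto
    then show "isCont ?q x" using dq DERIV_isCont by blast
  qed
  have m1: "?q a < ?q b" if ab: "1<a" "a<b" "b\<le>t1" for a b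
  proof (rule DERIV_pos_imp_increasing_open[where f="deriv p"])
    fix x assume "a < x" "x < b"
    then show "\<exists>y. DERIV ?q x :> y \<and> y > 0"
      using dq[of x] p''_pos ab by auto
  qed (use ab cont in auto)
  have m2: "?q b < ?q a" if ab: "t1\<le>a" "a<b" "b\<le>t2" for a b
  proof (rule DERIV_neg_imp_decreasing_open[where f="deriv p"])
    fix x assume "a < x" "x < b"
    then show "\<exists>y. DERIV ?q x :> y \<and> y < 0"
      using dq[of x] p''_neg ab t12 by auto
  qed (use ab t12 cont in auto)
  have m3: "?q a < ?q b" if ab: "t2\<le>a" "a<b" for a b
  proof (rule DERIV_pos_imp_increasing_open[where f="deriv p"])
    fix x assume "a < x" "x < b"
    then show "\<exists>y. DERIV ?q x :> y \<and> y > 0"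
      using dq[of x] p''_pos ab t12 by auto
  qed (use ab t12 cont in auto)
  show ?thesis
    by (rule core[where q = ?q and h = h and ?t1.0 = t1 and ?t2.0 = t2])
       (use t12 m1 m2 m3 h_deriv tf tpo tpr in auto)
qed

end
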